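(* Let $\mathcal{H}=\mathbb{C}^2$ and let $\mathcal{D}=\{\Psi_\rho : \rho \text{ a density operator on } \mathcal{H}\}$ be the set of depolarizing channels, where $\Psi_\rho(A)=(\operatorname{tr}A)\rho$ for all $A\in\mathcal{L}(\mathcal{H})$. For every density operator $\tau$ on $\mathcal{H}\otimes\mathcal{H}$, $$C(\tau,\mathcal{D})=\max_{\Psi\in\mathcal{D}}\operatorname{tr}[\tau J_\Psi]=\frac12\left(1+\|\boldsymbol{b}(\tau_2)\|\right),$$ where $\tau_2=\operatorname{tr}_1\tau$.
   Context: $\{|0\rangle,|1\rangle\}$ is the computational basis of $\mathcal{H}=\mathbb{C}^2$. For a linear map $\Psi$ on $\mathcal{L}(\mathcal{H})$, its Choi operator is $J_\Psi=(\mathrm{id}\otimes\Psi)(P'_+)$ with $P'_+=\sum_{i,j=0}^1|i\rangle\langle j|\otimes|i\rangle\langle j|$. $\operatorname{tr}_1$ denotes the partial trace over the first tensor factor. For an operator $X$ on $\mathcal{H}$, its Bloch vector is $\boldsymbol{b}(X)\in\mathbb{R}^3$ with $b(X)_i=\operatorname{tr}[\sigma_i X]$, $\sigma_1,\sigma_2,\sigma_3$ being the Pauli matrices, and $\|\cdot\|$ is the Euclidean norm on $\mathbb{R}^3$. *)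

theory Defs
  imports "HOL-Analysis.Analysis"
begin

text \<open>Operators on H = C^2 are 2x2 complex matrices indexed by the numeral type 2;
  index 1 corresponds to |0>, index 2 to |1>. Operators on H (x) H are matrices
  indexed by pairs (i,k) :: 2 \<times> 2, the first component referring to the first factor.\<close>

type_synonym op1 = "complex ^ 2 ^ 2"
type_synonym op2 = "complex ^ (2 \<times> 2) ^ (2 \<times> 2)"

definition mtrace :: "complex ^ 'n ^ 'n \<Rightarrow> complex" where
  "mtrace A = (\<Sum>i\<in>UNIV. A $ i $ i)"

definition psd :: "complex ^ 'n ^ 'n \<Rightarrow> bool" where
  "psd A \<longleftrightarrow> (\<forall>v :: complex ^ 'n.
     (let q = (\<Sum>i\<in>UNIV. \<Sum>j\<in>UNIV. cnj (v $ i) * A $ i $ j * v $ j)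
      in Im q = 0 \<and> Re q \<ge> 0))"

definition density :: "complex ^ 'n ^ 'n \<Rightarrow> bool" where
  "density A \<longleftrightarrow> psd A \<and> mtrace A = 1"

definition tensor :: "op1 \<Rightarrow> op1 \<Rightarrow> op2" where
  "tensor A B = (\<chi> p q. A $ fst p $ fst q * B $ snd p $ snd q)"

definition ketbra :: "2 \<Rightarrow> 2 \<Rightarrow> op1" where
  "ketbra i j = (\<chi> a b. if a = i \<and> b = j then 1 else 0)"

definition choi :: "(op1 \<Rightarrow> op1) \<Rightarrow> op2" where
  "choi \<Psi> = (\<Sum>i\<in>UNIV. \<Sum>j\<in>UNIV. tensor (ketbra i j) (\<Psi> (ketbra i j)))"

definition ptrace1 :: "op2 \<Rightarrow> op1" where
  "ptrace1 X = (\<chi> k l. \<Sum>i\<in>UNIV. X $ (i,k) $ (i,l))"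

definition depol_channel :: "op1 \<Rightarrow> (op1 \<Rightarrow> op1)" where
  "depol_channel \<rho> = (\<lambda>A. (\<chi> a b. mtrace A * \<rho> $ a $ b))"

definition depol_set :: "(op1 \<Rightarrow> op1) set" where
  "depol_set = {depol_channel \<rho> | \<rho>. density \<rho>}"

definition pauli1 :: op1 where
  "pauli1 = (\<chi> a b. if a \<noteq> b then 1 else 0)"
definition pauli2 :: op1 where
  "pauli2 = (\<chi> a b. if a = 1 \<and> b = 2 then - \<i> else if a = 2 \<and> b = 1 then \<i> else 0)"
definition pauli3 :: op1 where
  "pauli3 = (\<chi> a b. if a = b then (if a = 1 then 1 else -1) else 0)"

text \<open>Bloch vector b(X)_i = tr[sigma_i X] (real for Hermitian X; we take the real part).\<close>
definition bloch :: "op1 \<Rightarrow> real ^ 3" where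
  "bloch X = vector [Re (mtrace (pauli1 ** X)), Re (mtrace (pauli2 ** X)), Re (mtrace (pauli3 ** X))]"

end

theory Submission
  imports Defs
begin

lemma UNIV_22: "(UNIV :: (2\<times>2) set) = {(1,1),(1,2),(2,1),(2,2)}"
  using exhaust_2 by auto

lemma sum_22: "sum f (UNIV::(2\<times>2) set) = f (1,1) + f (1,2) + f (2,1) + f (2,2)"
  unfolding UNIV_22 by (simp add: ac_simps)

lemma mtrace2: "mtrace (A::op1) = A$1$1 + A$2$2"
  by (simp add: mtrace_def sum_2)

lemma mtrace_mult2: "mtrace ((A::op1) ** B) = A$1$1*B$1$1 + A$1$2*B$2$1 + A$2$1*B$1$2 + A$2$2*B$2$2"
  by (simp add: mtrace_def sum_2 matrix_matrix_mult_def)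

lemma choi_depol: "choi (depol_channel \<rho>) = (\<chi> p q. if fst p = fst q then \<rho> $ snd p $ snd q else 0)"
  unfolding choi_def depol_channel_def tensor_def ketbra_def
  by (simp add: vec_eq_iff sum_2 mtrace2 forall_2)

lemma ptrace_e: "ptrace1 X $ k $ l = X$(1,k)$(1,l) + X$(2,k)$(2,l)"
  by (simp add: ptrace1_def sum_2)

lemma trace_red: "mtrace (\<tau> ** choi (depol_channel \<rho>)) = mtrace (ptrace1 \<tau> ** \<rho>)"
  unfolding choi_depol mtrace_mult2 ptrace_e
  by (simp add: mtrace_def matrix_matrix_mult_def sum_22 algebra_simps)

lemma psd2: "psd (A::op1) \<Longrightarrow>
  (let q = cnj x * A$1$1 * x + cnj x * A$1$2 * y + cnj y * A$2$1 * x + cnj y * A$2$2 * y in Im q = 0 \<and> Re q \<ge> 0)"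
  unfolding psd_def
  apply (drule spec[of _ "vector [x,y]"])
  by (simp add: sum_2 Let_def algebra_simps)

lemma psd_ptrace: assumes "psd (\<tau>::op2)" shows "psd (ptrace1 \<tau>)"
  unfolding psd_def
proof
  fix v :: "complex^2"
  define w :: "2 \<Rightarrow> complex^(2\<times>2)" where "w i = (\<chi> p. if fst p = i then v$snd p else 0)" for i
  have h: "\<And>i. (let q = (\<Sum>p\<in>UNIV. \<Sum>q\<in>UNIV. cnj (w i $ p) * \<tau> $ p $ q * w i $ q) in Im q = 0 \<and> Re q \<ge> 0)"
    using assms unfolding psd_def by blast
  have e: "(\<Sum>i\<in>UNIV. \<Sum>j\<in>UNIV. cnj (v $ i) * ptrace1 \<tau> $ i $ j * v $ j)
     = (\<Sum>p\<in>UNIV. \<Sum>q\<in>UNIV. cnj (w 1 $ p) * \<tau> $ p $ q * w 1 $ q) + (\<Sum>p\<in>UNIV. \<Sum>q\<in>UNIV. cnj (w 2 $ p) * \<tau> $ p $ q * w 2 $ q)"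
    unfolding w_def ptrace_e by (simp add: sum_2 sum_22 algebra_simps)
  show "let q = \<Sum>i\<in>UNIV. \<Sum>j\<in>UNIV. cnj (v $ i) * ptrace1 \<tau> $ i $ j * v $ j in Im q = 0 \<and> 0 \<le> Re q"
    unfolding e using h[of 1] h[of 2] by (simp add: Let_def)
qed

lemma trace_ptrace: "mtrace (ptrace1 \<tau>) = mtrace \<tau>"
  by (simp add: mtrace2 ptrace_e mtrace_def sum_22)

lemma cmm: "cmod c * cmod c = Re c * Re c + Im c * Im c"
  by (metis cmod_power2 power2_eq_square)

lemma psd2_herm: assumes "psd (A::op1)"
  shows "Im (A$1$1) = 0" "Im (A$2$2) = 0" "Re (A$1$1) \<ge> 0" "Re (A$2$2) \<ge> 0" "A$2$1 = cnj (A$1$2)"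
    "Re (A$1$1) * ((cmod (A$1$2))^2) \<le> Re (A$1$1) * (Re (A$1$1) * Re (A$2$2))"
    "Re (A$2$2) * ((cmod (A$1$2))^2) \<le> Re (A$2$2) * (Re (A$1$1) * Re (A$2$2))"
proof -
  note p = psd2[OF assms]
  show a: "Im (A$1$1) = 0" "Re (A$1$1) \<ge> 0" using p[of 1 0] by (simp_all add: Let_def)
  show d: "Im (A$2$2) = 0" "Re (A$2$2) \<ge> 0" using p[of 0 1] by (simp_all add: Let_def)
  have s: "Im (A$1$2 + A$2$1) = 0" using p[of 1 1] a d by (simp add: Let_def)
  have t: "Re (A$1$2 - A$2$1) = 0" using p[of 1 \<i>] a d by (simp add: Let_def algebra_simps)
  show h: "A$2$1 = cnj (A$1$2)" using s t by (simp add: complex_eq_iff)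
  have "A$1$1 = of_real (Re (A$1$1))" "A$2$2 = of_real (Re (A$2$2))" using a d by (simp_all add: complex_eq_iff)
  then obtain a d c where A: "A$1$1 = of_real a" "A$2$2 = of_real d" "A$1$2 = c" "A$2$1 = cnj c"
    using h by blast
  have "0 \<le> Re (cnj (- c) * A$1$1 * (- c) + cnj (- c) * A$1$2 * of_real a + cnj (of_real a) * A$2$1 * (-c) + cnj (of_real a) * A$2$2 * of_real a)"
    using p[of "-c" "of_real a"] by (simp add: Let_def)
  also have "\<dots> = a * (a * d - (cmod c)^2)" unfolding A
    by (simp add: algebra_simps power2_eq_square cmm)
  finally show "Re (A$1$1) * ((cmod (A$1$2))^2) \<le> Re (A$1$1) * (Re (A$1$1) * Re (A$2$2))"
    using A by (simp add: algebra_simps)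
  have "0 \<le> Re (cnj (of_real d) * A$1$1 * of_real d + cnj (of_real d) * A$1$2 * (- cnj c) + cnj (- cnj c) * A$2$1 * of_real d + cnj (- cnj c) * A$2$2 * (- cnj c))"
    using p[of "of_real d" "- cnj c"] by (simp add: Let_def)
  also have "\<dots> = d * (a * d - (cmod c)^2)" unfolding A
    by (simp add: algebra_simps power2_eq_square cmm)
  finally show "Re (A$2$2) * ((cmod (A$1$2))^2) \<le> Re (A$2$2) * (Re (A$1$1) * Re (A$2$2))"
    using A by (simp add: algebra_simps)
qed

lemma dens2: assumes "density (A::op1)"
  shows "Im (A$1$1) = 0" "Im (A$2$2) = 0" "Re (A$1$1) \<ge> 0" "Re (A$2$2) \<ge> 0" "A$2$1 = cnj (A$1$2)"
    "Re (A$1$1) + Re (A$2$2) = 1"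
    "(cmod (A$1$2))^2 \<le> Re (A$1$1) * Re (A$2$2)"
proof -
  have p: "psd A" and t: "A$1$1 + A$2$2 = 1" using assms by (auto simp: density_def mtrace2)
  note h = psd2_herm[OF p]
  show "Im (A$1$1) = 0" "Im (A$2$2) = 0" "Re (A$1$1) \<ge> 0" "Re (A$2$2) \<ge> 0" "A$2$1 = cnj (A$1$2)"
    using h by auto
  show tr: "Re (A$1$1) + Re (A$2$2) = 1" using arg_cong[OF t, of Re] by simp
  show "(cmod (A$1$2))^2 \<le> Re (A$1$1) * Re (A$2$2)"
  proof (cases "Re (A$1$1) > 0")
    case True then show ?thesis using h(6) by simp
  next
    case False then have "Re (A$2$2) > 0" using tr h(3) by linarith
    then show ?thesis using h(7) by simp
  qed
qed

definition mk2 :: "real \<Rightarrow> complex \<Rightarrow> real \<Rightarrow> op1" where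
  "mk2 a c d = (\<chi> i j. if i = 1 then (if j = 1 then of_real a else c) else (if j = 1 then cnj c else of_real d))"

lemma mk2_e [simp]: "mk2 a c d $ 1 $ 1 = of_real a" "mk2 a c d $ 1 $ 2 = c"
  "mk2 a c d $ 2 $ 1 = cnj c" "mk2 a c d $ 2 $ 2 = of_real d"
  by (simp_all add: mk2_def)

lemma dens_mk: assumes "density A" shows "A = mk2 (Re (A$1$1)) (A$1$2) (Re (A$2$2))"
  using dens2[OF assms] by (simp add: vec_eq_iff forall_2 complex_eq_iff)

lemma tr_formula: "mtrace (mk2 a c d ** mk2 p r q) = of_real (a*p + d*q + 2*(Re c * Re r + Im c * Im r))"
  by (simp add: mtrace_mult2 complex_eq_iff algebra_simps)

lemma bloch_mk: "norm (bloch (mk2 a c d)) = sqrt ((2 * Re c)^2 + (2 * Im c)^2 + (a - d)^2)"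
  unfolding bloch_def norm_vec_def L2_set_def
  by (simp add: sum_3 mtrace_mult2 pauli1_def pauli2_def pauli3_def algebra_simps power2_eq_square)

lemma mk_dens: assumes "a \<ge> 0" "d \<ge> 0" "a + d = 1" "(cmod c)^2 \<le> a * d"
  shows "density (mk2 a c d)"
  unfolding density_def psd_def
proof (intro conjI allI)
  show "mtrace (mk2 a c d) = 1" using assms by (simp add: mtrace2 flip: of_real_add)
  fix v :: "complex^2"
  define x where "x = v$1"
  define y where "y = v$2"
  define z where "z = cnj x * c * y"
  have q: "(\<Sum>i\<in>UNIV. \<Sum>j\<in>UNIV. cnj (v $ i) * mk2 a c d $ i $ j * v $ j)
    = of_real a * (x * cnj x) + of_real d * (y * cnj y) + (z + cnj z)"
    unfolding z_def x_def y_def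
    by (simp add: sum_2 algebra_simps)
  also have "\<dots> = of_real (a * (cmod x)^2 + d * (cmod y)^2) + (z + cnj z)"
    by (simp add: complex_norm_square[symmetric] del: of_real_power)
  finally have q: "(\<Sum>i\<in>UNIV. \<Sum>j\<in>UNIV. cnj (v $ i) * mk2 a c d $ i $ j * v $ j)
    = of_real (a * (cmod x)^2 + d * (cmod y)^2) + (z + cnj z)" .
  have zn: "cmod z = cmod x * cmod c * cmod y" unfolding z_def by (simp add: norm_mult)
  have "- cmod z \<le> Re z" using abs_Re_le_cmod[of z] by linarith
  moreover have "cmod z \<le> (a * (cmod x)^2 + d * (cmod y)^2) / 2"
  proof -
    have "(cmod z)^2 \<le> (a*d) * ((cmod x)^2 * (cmod y)^2)"
      unfolding zn using mult_right_mono[OF assms(4), of "(cmod x)^2 * (cmod y)^2"]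
      by (simp add: power_mult_distrib algebra_simps)
    also have "\<dots> \<le> ((a * (cmod x)^2 + d * (cmod y)^2) / 2)^2"
    proof -
      have "0 \<le> (a * (cmod x)^2 - d * (cmod y)^2)^2" by simp
      then show ?thesis by (simp add: power2_eq_square algebra_simps divide_simps)
    qed
    finally show ?thesis
      by (rule power2_le_imp_le) (use assms in simp)
  qed
  ultimately show "let q = \<Sum>i\<in>UNIV. \<Sum>j\<in>UNIV. cnj (v $ i) * mk2 a c d $ i $ j * v $ j in Im q = 0 \<and> 0 \<le> Re q"
    unfolding q by (simp add: Let_def)
qed

lemma cs3: "x1*y1 + x2*y2 + x3*y3 \<le> sqrt (x1^2+x2^2+x3^2) * sqrt (y1^2+y2^2+y3^2)"
proof -
  have "(x1^2+x2^2+x3^2) * (y1^2+y2^2+y3^2) - (x1*y1 + x2*y2 + x3*y3)^2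
     = (x1*y2-x2*y1)^2+(x1*y3-x3*y1)^2+(x2*y3-x3*y2)^2"
    by (simp add: power2_eq_square algebra_simps)
  then have "(x1*y1 + x2*y2 + x3*y3)^2 \<le> (x1^2+x2^2+x3^2) * (y1^2+y2^2+y3^2)"
    by (smt (verit) zero_le_power2)
  then have "x1*y1 + x2*y2 + x3*y3 \<le> sqrt ((x1^2+x2^2+x3^2) * (y1^2+y2^2+y3^2))"
    by (rule real_le_rsqrt)
  then show ?thesis by (simp add: real_sqrt_mult)
qed

theorem proposition1:
  fixes \<tau> :: op2
  assumes "density \<tau>"
  shows "complex_of_real ((1 + norm (bloch (ptrace1 \<tau>))) / 2)
           \<in> (\<lambda>\<Psi>. mtrace (\<tau> ** choi \<Psi>)) ` depol_set
       \<and> (\<forall>\<Psi>\<in>depol_set. mtrace (\<tau> ** choi \<Psi>) \<in> \<real>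
            \<and> Re (mtrace (\<tau> ** choi \<Psi>)) \<le> (1 + norm (bloch (ptrace1 \<tau>))) / 2)"
proof -
  define \<sigma> where "\<sigma> = ptrace1 \<tau>"
  have ds: "density \<sigma>" using assms unfolding \<sigma>_def density_def
    using psd_ptrace trace_ptrace by auto
  define a where "a = Re (\<sigma>$1$1)"
  define c where "c = \<sigma>$1$2"
  define d where "d = Re (\<sigma>$2$2)"
  have sm: "\<sigma> = mk2 a c d" unfolding a_def c_def d_def by (rule dens_mk[OF ds])
  have ad: "a + d = 1" "a \<ge> 0" "d \<ge> 0" "(cmod c)^2 \<le> a * d"
    using dens2[OF ds] unfolding a_def c_def d_def by auto
  define N where "N = sqrt ((2 * Re c)^2 + (2 * Im c)^2 + (a - d)^2)"
  have Nb: "norm (bloch (ptrace1 \<tau>)) = N" unfolding N_def \<sigma>_def[symmetric] sm bloch_mk ..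
  have N0: "N \<ge> 0" unfolding N_def by simp
  have val: "mtrace (\<tau> ** choi (depol_channel (mk2 p r q))) = of_real (a*p + d*q + 2*(Re c * Re r + Im c * Im r))"
    for p r q
    unfolding trace_red \<sigma>_def[symmetric] sm tr_formula ..
  have part2: "\<forall>\<Psi>\<in>depol_set. mtrace (\<tau> ** choi \<Psi>) \<in> \<real>
            \<and> Re (mtrace (\<tau> ** choi \<Psi>)) \<le> (1 + N) / 2"
  proof
    fix \<Psi> assume "\<Psi> \<in> depol_set"
    then obtain \<rho> where \<Psi>: "\<Psi> = depol_channel \<rho>" and dr: "density \<rho>" unfolding depol_set_def by auto
    define p where "p = Re (\<rho>$1$1)"
    define r where "r = \<rho>$1$2"
    define q where "q = Re (\<rho>$2$2)"
    have rm: "\<rho> = mk2 p r q" unfolding p_def r_def q_def by (rule dens_mk[OF dr])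
    have pq: "p + q = 1" "p \<ge> 0" "q \<ge> 0" "(cmod r)^2 \<le> p * q"
      using dens2[OF dr] unfolding p_def r_def q_def by auto
    have e: "a*p + d*q + 2*(Re c * Re r + Im c * Im r)
      = (1 + ((2*Re c)*(2*Re r) + (2*Im c)*(2*Im r) + (a-d)*(p-q)))/2"
    proof -
      have "2*(a*p + d*q) = 1 + (a-d)*(p-q)"
      proof -
        have "1 + (a-d)*(p-q) = (a+d)*(p+q) + (a-d)*(p-q)" using ad(1) pq(1) by simp
        also have "\<dots> = 2*(a*p + d*q)" by (simp add: algebra_simps)
        finally show ?thesis by simp
      qed
      then show ?thesis by (simp add: algebra_simps divide_simps)
    qed
    have Y: "sqrt ((2*Re r)^2 + (2*Im r)^2 + (p-q)^2) \<le> 1"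
    proof -
      have "(2*Re r)^2 + (2*Im r)^2 + (p-q)^2 = 4 * (cmod r)^2 + (p-q)^2"
        by (simp add: cmod_power2 algebra_simps)
      also have "\<dots> \<le> 4*(p*q) + (p-q)^2" using pq(4) by simp
      also have "\<dots> = (p+q)^2" by (simp add: power2_eq_square algebra_simps)
      finally show ?thesis using pq(1) by simp
    qed
    have "(2*Re c)*(2*Re r) + (2*Im c)*(2*Im r) + (a-d)*(p-q) \<le> N * sqrt ((2*Re r)^2 + (2*Im r)^2 + (p-q)^2)"
      unfolding N_def by (rule cs3)
    also have "\<dots> \<le> N" using Y N0 mult_left_mono[OF Y N0] by simp
    finally have "a*p + d*q + 2*(Re c * Re r + Im c * Im r) \<le> (1 + N)/2" unfolding e by simp
    then show "mtrace (\<tau> ** choi \<Psi>) \<in> \<real> \<and> Re (mtrace (\<tau> ** choi \<Psi>)) \<le> (1 + N) / 2"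
      unfolding \<Psi> rm val by simp
  qed
  have part1: "complex_of_real ((1 + N) / 2) \<in> (\<lambda>\<Psi>. mtrace (\<tau> ** choi \<Psi>)) ` depol_set"
  proof (cases "N > 0")
    case True
    define p where "p = (1 + (a-d)/N)/2"
    define q where "q = (1 - (a-d)/N)/2"
    define r where "r = c / of_real N"
    have NN: "N^2 = (2 * Re c)^2 + (2 * Im c)^2 + (a - d)^2" unfolding N_def by simp
    have ub: "\<bar>a - d\<bar> \<le> N"
      unfolding N_def by (rule real_le_rsqrt) simp
    have "(a-d)/N \<le> 1" "-1 \<le> (a-d)/N" using ub True by (auto simp: divide_simps abs_le_iff)
    then have pq: "p \<ge> 0" "q \<ge> 0" "p + q = 1" unfolding p_def q_def by (auto simp: field_simps)
    have rr: "(cmod r)^2 = (cmod c)^2 / N^2" unfolding r_def using True by (simp add: norm_divide power_divide)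
    have "p * q = (N^2 - (a-d)^2) / (4 * N^2)" unfolding p_def q_def using True
      by (simp add: divide_simps power2_eq_square algebra_simps)
    also have "\<dots> = (cmod r)^2" unfolding rr NN using True
      by (simp add: cmm divide_simps power2_eq_square algebra_simps)
    finally have "(cmod r)^2 \<le> p * q" by simp
    then have dr: "density (mk2 p r q)" using mk_dens pq by auto
    have "a*p + d*q + 2*(Re c * Re r + Im c * Im r) = (1 + N)/2"
    proof -
      have "a*p + d*q + 2*(Re c * Re r + Im c * Im r)
          = ((a+d) + ((a-d)^2 + (2*Re c)^2 + (2*Im c)^2)/N)/2"
        unfolding p_def q_def r_def using True
        by (simp add: divide_simps power2_eq_square algebra_simps)
      also have "\<dots> = (1 + ((a-d)^2 + (2*Re c)^2 + (2*Im c)^2)/N)/2" using ad(1) by simp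
      also have "\<dots> = (1 + N^2/N)/2" unfolding NN by (simp add: algebra_simps)
      also have "\<dots> = (1+N)/2" using True by (simp add: power2_eq_square)
      finally show ?thesis .
    qed
    then have "mtrace (\<tau> ** choi (depol_channel (mk2 p r q))) = complex_of_real ((1 + N) / 2)"
      unfolding val by (rule arg_cong[where f=complex_of_real])
    moreover have "depol_channel (mk2 p r q) \<in> depol_set" using dr unfolding depol_set_def by auto
    ultimately show ?thesis by (metis image_eqI)
  next
    case False
    then have "N = 0" using N0 by simp
    then have z: "(2 * Re c)^2 + (2 * Im c)^2 + (a - d)^2 = 0" unfolding N_def by simp
    have "(2 * Re c)^2 \<ge> 0" "(2 * Im c)^2 \<ge> 0" "(a - d)^2 \<ge> 0" by simp_all
    then have "(2 * Re c)^2 = 0" "(2 * Im c)^2 = 0" "(a - d)^2 = 0" using z by linarith+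
    then have "a = d" "Re c = 0" "Im c = 0" by simp_all
    then have v: "a*(1/2) + d*(1/2) + 2*(Re c * Re 0 + Im c * Im 0) = (1 + N)/2" using ad(1) \<open>N = 0\<close> by simp
    have dr: "density (mk2 (1/2) 0 (1/2))" by (rule mk_dens) auto
    have "mtrace (\<tau> ** choi (depol_channel (mk2 (1/2) 0 (1/2)))) = complex_of_real ((1 + N) / 2)"
      unfolding val v ..
    moreover have "depol_channel (mk2 (1/2) 0 (1/2)) \<in> depol_set" using dr unfolding depol_set_def by auto
    ultimately show ?thesis by (metis image_eqI)
  qed
  show ?thesis using part1 part2 unfolding Nb by simp
qed

end
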